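(* Let $N\ge2$, $d\ge1$, and let $\tilde\psi:\mathbb{R}\to\mathbb{R}$ be a positive, bounded, continuous function with $\tilde K:=\|\tilde\psi\|_\infty$. Let $\{t_n\}_{n\in\mathbb{N}_0}$ be an increasing sequence of nonnegative numbers with $t_0=0$, $t_n\to\infty$, and define $\alpha:[0,\infty)\to\{-1,1\}$ by $\alpha(0)=1$, $\alpha(t)=1$ on $(t_{2n},t_{2n+1})$, $\alpha(t)=-1$ on $[t_{2n+1},t_{2n+2}]$, $n\in\mathbb{N}_0$. Assume $t_{2n+2}-t_{2n+1}<\frac{\ln2}{\tilde K}$ for all $n\in\mathbb{N}_0$, $\sum_{p=0}^{\infty}(t_{2p+2}-t_{2p+1})<+\infty$, and $$\sup_{n\in\mathbb{N}_0}\left(\frac{e^{\tilde K(t_{2n+2}-t_{2n+1})}}{2-e^{\tilde K(t_{2n+2}-t_{2n+1})}}\max\left\{1-e^{-\tilde K(t_{2n+1}-t_{2n})},\,1-\frac{\tilde\psi_0}{\tilde K}\big(1-e^{-\tilde K(t_{2n+1}-t_{2n})}\big)\right\}\right)=c<1,$$ where $\tilde\psi_0:=\min_{|y|\le\tilde M^0}\tilde\psi(y)$, $\tilde M^0:=e^{\sum_{p=0}^{\infty}\ln\left(\frac{e^{\tilde K(t_{2p+2}-t_{2p+1})}}{2-e^{\tilde K(t_{2p+2}-t_{2p+1})}}\right)}d(0)$. Then every solution $\{x_i\}$ of $$\frac{d}{dt}x_i(t)=\frac{1}{N-1}\sum_{j\ne i}\alpha(t)\,\tilde\psi(|x_i(t)-x_j(t)|)\,(x_j(t)-x_i(t)),\quad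 t>0,\qquad x_i(0)=x_i^0\in\mathbb{R}^d,$$ satisfies $d(t)\le e^{-\gamma\left(t-\frac{\ln2}{\tilde K}-T\right)}d(0)$ for all $t\ge0$, for suitable positive constants $\gamma$ (independent of $N$) and $T$, where $d(t):=\max_{i,j}|x_i(t)-x_j(t)|$.
   Context: $\mathbb{N}_0=\{0,1,2,\dots\}$. A solution is a continuous function that is $C^1$ on each interval $(t_n,t_{n+1})$ and satisfies the equation there. *)

theory Defs
  imports "HOL-Analysis.Analysis"
begin

definition alpha :: "(nat \<Rightarrow> real) \<Rightarrow> real \<Rightarrow> real" where
  "alpha tt s = (if s = 0 then 1
     else if (\<exists>n. tt (2*n+1) \<le> s \<and> s \<le> tt (2*n+2)) then -1 else 1)"

definition diam :: "nat \<Rightarrow> (nat \<Rightarrow> real \<Rightarrow> real^'d) \<Rightarrow> real \<Rightarrow> real" where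
  "diam N x s = Max {norm (x i s - x j s) | i j. i < N \<and> j < N}"

definition rhs :: "nat \<Rightarrow> (nat \<Rightarrow> real) \<Rightarrow> (real \<Rightarrow> real) \<Rightarrow> (nat \<Rightarrow> real \<Rightarrow> real^'d)
                    \<Rightarrow> nat \<Rightarrow> real \<Rightarrow> real^'d" where
  "rhs N tt psi x i s = (1 / (real N - 1)) *\<^sub>R
     (\<Sum>j\<in>{j. j < N \<and> j \<noteq> i}.
        (alpha tt s * psi (norm (x i s - x j s))) *\<^sub>R (x j s - x i s))"

text \<open>Solution: continuous on [0,\<infinity>), and on each (t_n, t_{n+1}) differentiable
  satisfying the equation (hence C^1 there, the right-hand side being continuous).\<close>
definition is_solution :: "nat \<Rightarrow> (nat \<Rightarrow> real) \<Rightarrow> (real \<Rightarrow> real) \<Rightarrow> (nat \<Rightarrow> real \<Rightarrow> real^'d) \<Rightarrow> bool" where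
  "is_solution N tt psi x \<longleftrightarrow>
     (\<forall>i<N. continuous_on {0..} (x i)) \<and>
     (\<forall>i<N. \<forall>n. \<forall>s\<in>{tt n<..<tt (Suc n)}.
        (x i has_vector_derivative rhs N tt psi x i s) (at s))"

end

theory Submission
  imports Defs
begin


lemma maxA0:
  fixes h :: "'q \<Rightarrow> real \<Rightarrow> real"
  assumes Q: "finite Q" and rb: "r \<le> b"
    and cont: "\<And>q. q\<in>Q \<Longrightarrow> continuous_on {r..b} (h q)"
    and der: "\<And>t q. t\<in>{r..<b} \<Longrightarrow> q\<in>Q \<Longrightarrow> (\<forall>q'\<in>Q. h q' t \<le> h q t) \<Longrightarrow>
               \<exists>D<0. (h q has_real_derivative D) (at t)"
    and init: "\<And>q. q\<in>Q \<Longrightarrow> h q r \<le> C"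
  shows "\<forall>q\<in>Q. h q b \<le> C"
proof -
  define S where "S = {t \<in> {r..b}. \<forall>u\<in>{r..t}. \<forall>q\<in>Q. h q u \<le> C}"
  have rS: "r \<in> S" using init rb by (auto simp: S_def)
  have bdd: "bdd_above S" by (auto simp: S_def bdd_above_def)
  define ts where "ts = Sup S"
  have rts: "r \<le> ts" using rS bdd by (simp add: ts_def cSup_upper)
  have tsb: "ts \<le> b" unfolding ts_def using rS by (intro cSup_least) (auto simp: S_def)
  have below: "\<forall>q\<in>Q. h q u \<le> C" if "u \<in> {r..<ts}" for u
  proof -
    from that have "u < Sup S" by (simp add: ts_def)
    then obtain t where "t \<in> S" "u < t" using rS by (metis empty_iff less_cSupE)
    then show ?thesis using that by (auto simp: S_def)
  qed
  have atts: "\<forall>q\<in>Q. h q ts \<le> C"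
  proof
    fix q assume q: "q \<in> Q"
    show "h q ts \<le> C"
    proof (cases "r = ts")
      case True then show ?thesis using init q by simp
    next
      case False
      then have lt: "r < ts" using rts by simp
      have cl: "closed {u \<in> {r..ts}. h q u \<le> C}"
        by (rule continuous_on_closed_Collect_le)
           (use tsb in \<open>auto intro!: continuous_on_subset[OF cont[OF q]]\<close>)
      have "{r..<ts} \<subseteq> {u \<in> {r..ts}. h q u \<le> C}" using below q by auto
      then have "closure {r..<ts} \<subseteq> {u \<in> {r..ts}. h q u \<le> C}"
        using cl by (meson closure_minimal)
      moreover have "ts \<in> closure {r..<ts}" using lt by simp
      ultimately have "ts \<in> {u \<in> {r..ts}. h q u \<le> C}" by blast
      then show ?thesis by simp
    qed
  qed
  have "ts = b"
  proof (rule ccontr)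
    assume "ts \<noteq> b"
    then have tslt: "ts < b" using tsb by simp
    have ev: "\<forall>q\<in>Q. eventually (\<lambda>s. h q s \<le> C) (at_right ts)"
    proof
      fix q assume q: "q \<in> Q"
      show "eventually (\<lambda>s. h q s \<le> C) (at_right ts)"
      proof (cases "h q ts < C")
        case True
        have "ts \<in> {r..b}" using rts tsb by simp
        then obtain d where d: "d > 0" "\<forall>x'\<in>{r..b}. dist x' ts < d \<longrightarrow> dist (h q x') (h q ts) < C - h q ts"
          using cont[OF q] True unfolding continuous_on_iff by (meson diff_gt_0_iff_gt)
        show ?thesis unfolding eventually_at_right_field
        proof (intro exI[of _ "min (ts + d) b"] conjI allI impI)
          show "ts < min (ts + d) b" using d tslt by simp
          fix y assume "ts < y" "y < min (ts + d) b"
          then have "y \<in> {r..b} \<and> dist y ts < d" using rts by (auto simp: dist_real_def)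
          then have "dist (h q y) (h q ts) < C - h q ts" using d by auto
          then show "h q y \<le> C" by (auto simp: dist_real_def)
        qed
      next
        case False
        then have eq: "h q ts = C" using atts q by force
        then have "\<forall>q'\<in>Q. h q' ts \<le> h q ts" using atts by auto
        then obtain D where D: "D < 0" "(h q has_real_derivative D) (at ts)"
          using der[of ts q] q rts tslt by auto
        then obtain d where d: "d > 0" "\<forall>hh>0. hh < d \<longrightarrow> h q ts > h q (ts + hh)"
          using DERIV_neg_dec_right by blast
        show ?thesis unfolding eventually_at_right_field
        proof (intro exI[of _ "ts + d"] conjI allI impI)
          show "ts < ts + d" using d by simp
          fix y assume "ts < y" "y < ts + d"
          then have "h q ts > h q (ts + (y - ts))" using d(2)[rule_format, of "y - ts"] by linarith
          then show "h q y \<le> C" using eq by simp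
        qed
      qed
    qed
    have "eventually (\<lambda>s. \<forall>q\<in>Q. h q s \<le> C) (at_right ts)"
      by (rule eventually_ball_finite[OF Q ev])
    then obtain e where e: "e > ts" "\<forall>y>ts. y < e \<longrightarrow> (\<forall>q\<in>Q. h q y \<le> C)"
      unfolding eventually_at_right_field by blast
    define s where "s = (ts + min e b) / 2"
    have s: "ts < s" "s < e" "s \<le> b" using e tslt by (auto simp: s_def)
    have "\<forall>u\<in>{r..s}. \<forall>q\<in>Q. h q u \<le> C"
    proof (intro ballI)
      fix u q assume u: "u \<in> {r..s}" and q: "q \<in> Q"
      consider "u < ts" | "u = ts" | "u > ts" by linarith
      then show "h q u \<le> C"
      proof cases
        case 1 then show ?thesis using below q u by auto
      next
        case 2 then show ?thesis using atts q by auto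
      next
        case 3 then show ?thesis using e q u s by auto
      qed
    qed
    then have "s \<in> S" unfolding S_def using s rts by auto
    then have "s \<le> ts" using bdd by (simp add: ts_def cSup_upper)
    then show False using s by simp
  qed
  then show ?thesis using atts by simp
qed

lemma maxA:
  fixes h :: "'q \<Rightarrow> real \<Rightarrow> real"
  assumes Q: "finite Q" and ab: "a \<le> b"
    and cont: "\<And>q. q\<in>Q \<Longrightarrow> continuous_on {a..b} (h q)"
    and der: "\<And>t q. t\<in>{a<..<b} \<Longrightarrow> q\<in>Q \<Longrightarrow> (\<forall>q'\<in>Q. h q' t \<le> h q t) \<Longrightarrow>
               \<exists>D<0. (h q has_real_derivative D) (at t)"
    and init: "\<And>q. q\<in>Q \<Longrightarrow> h q a \<le> C"
  shows "\<forall>q\<in>Q. h q b \<le> C"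
proof (cases "a = b")
  case True then show ?thesis using init by simp
next
  case False
  then have ab': "a < b" using ab by simp
  have "h q b \<le> C + eta" if q0: "q \<in> Q" and eta: "eta > 0" for q eta
  proof -
    have ev: "\<forall>q\<in>Q. eventually (\<lambda>s. h q s \<le> C + eta) (at_right a)"
    proof
      fix q assume q: "q \<in> Q"
      have "a \<in> {a..b}" using ab by simp
      then obtain d where d: "d > 0" "\<forall>x'\<in>{a..b}. dist x' a < d \<longrightarrow> dist (h q x') (h q a) < eta"
        using cont[OF q] eta unfolding continuous_on_iff by meson
      show "eventually (\<lambda>s. h q s \<le> C + eta) (at_right a)" unfolding eventually_at_right_field
      proof (intro exI[of _ "min (a + d) b"] conjI allI impI)
        show "a < min (a + d) b" using d ab' by simp
        fix y assume "a < y" "y < min (a + d) b"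
        then have "y \<in> {a..b} \<and> dist y a < d" by (auto simp: dist_real_def)
        then have "dist (h q y) (h q a) < eta" using d by auto
        then show "h q y \<le> C + eta" using init[OF q] by (auto simp: dist_real_def)
      qed
    qed
    have "eventually (\<lambda>s. \<forall>q\<in>Q. h q s \<le> C + eta) (at_right a)"
      by (rule eventually_ball_finite[OF Q ev])
    then obtain e where e: "e > a" "\<forall>y>a. y < e \<longrightarrow> (\<forall>q\<in>Q. h q y \<le> C + eta)"
      unfolding eventually_at_right_field by blast
    define r where "r = (a + min e b) / 2"
    have r: "a < r" "r < e" "r < b" using e ab' by (auto simp: r_def)
    have "\<forall>q\<in>Q. h q b \<le> C + eta"
    proof (rule maxA0[OF Q])
      show "r \<le> b" using r by simp
      show "continuous_on {r..b} (h q)" if "q \<in> Q" for q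
        using cont[OF that] by (rule continuous_on_subset) (use r in auto)
      show "\<exists>D<0. (h q has_real_derivative D) (at t)"
        if "t \<in> {r..<b}" "q \<in> Q" "\<forall>q'\<in>Q. h q' t \<le> h q t" for t q
        using der[of t q] that r by auto
      show "h q r \<le> C + eta" if "q \<in> Q" for q using e r that by auto
    qed
    then show ?thesis using q0 by auto
  qed
  then show ?thesis by (meson field_le_epsilon)
qed

lemma inner_self_deriv:
  fixes y :: "real \<Rightarrow> 'a::real_inner"
  assumes "(y has_vector_derivative w) (at t)"
  shows "((\<lambda>s. y s \<bullet> y s) has_real_derivative (2 * (y t \<bullet> w))) (at t)"
proof -
  have d: "(y has_derivative (\<lambda>h. h *\<^sub>R w)) (at t)"
    using assms by (simp add: has_vector_derivative_def)
  have "((\<lambda>s. y s \<bullet> y s) has_derivative (\<lambda>h. y t \<bullet> (h *\<^sub>R w) + (h *\<^sub>R w) \<bullet> y t)) (at t)"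
    by (rule has_derivative_inner[OF d d])
  moreover have "(\<lambda>h. y t \<bullet> (h *\<^sub>R w) + (h *\<^sub>R w) \<bullet> y t) = (*) (2 * (y t \<bullet> w))"
    by (auto simp: inner_commute algebra_simps)
  ultimately show ?thesis by (simp add: has_field_derivative_def)
qed

lemma diam_eq: "diam N x s = Max ((\<lambda>(i,j). norm (x i s - x j s)) ` ({..<N} \<times> {..<N}))"
  unfolding diam_def by (rule arg_cong[where f=Max]) auto

lemma diam_ge: "i < N \<Longrightarrow> j < N \<Longrightarrow> norm (x i s - x j s) \<le> diam N x s"
  unfolding diam_eq by (rule Max_ge) auto

lemma diam_le: "N \<ge> 1 \<Longrightarrow> (\<And>i j. i < N \<Longrightarrow> j < N \<Longrightarrow> norm (x i s - x j s) \<le> C) \<Longrightarrow> diam N x s \<le> C"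
  unfolding diam_eq by (subst Max_le_iff) (auto simp: lessThan_empty_iff)

lemma diam_nonneg: "N \<ge> 1 \<Longrightarrow> diam N x s \<ge> 0"
  using diam_ge[of 0 N 0 x s] by simp

lemma diam_growth:
  fixes x :: "nat \<Rightarrow> real \<Rightarrow> real^'d" and v :: "nat \<Rightarrow> real \<Rightarrow> real^'d"
  assumes N: "N \<ge> 1" and ab: "a \<le> b"
    and cont: "\<And>i. i<N \<Longrightarrow> continuous_on {a..b} (x i)"
    and der: "\<And>i t. i<N \<Longrightarrow> t\<in>{a<..<b} \<Longrightarrow> (x i has_vector_derivative v i t) (at t)"
    and key: "\<And>t i k. t\<in>{a<..<b} \<Longrightarrow> i<N \<Longrightarrow> k<N \<Longrightarrow>
       (\<forall>i'<N. \<forall>k'<N. norm (x i' t - x k' t) \<le> norm (x i t - x k t)) \<Longrightarrow>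
       (x i t - x k t) \<bullet> (v i t - v k t) \<le> lam * (norm (x i t - x k t))^2"
  shows "diam N x b \<le> exp (lam * (b - a)) * diam N x a"
proof -
  define D0 where "D0 = diam N x a"
  have D0: "D0 \<ge> 0" using diam_nonneg[OF N] by (simp add: D0_def)
  define Q where "Q = {..<N} \<times> {..<N}"
  have Q: "finite Q" by (simp add: Q_def)
  define g where "g q t = (x (fst q) t - x (snd q) t) \<bullet> (x (fst q) t - x (snd q) t)" for q t
  have gn: "g q t = (norm (x (fst q) t - x (snd q) t))^2" for q t
    by (simp add: g_def power2_norm_eq_inner)
  have main: "exp (-2*lam*(b-a)) * g q b \<le> D0^2 + eps*(b-a)" if q: "q\<in>Q" and eps: "eps>0" for q eps
  proof -
    define h where "h q t = exp (-2*lam*(t-a)) * g q t - eps*(t-a)" for q t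
    have "\<forall>q\<in>Q. h q b \<le> D0^2"
    proof (rule maxA[OF Q ab])
      show "continuous_on {a..b} (h q)" if "q \<in> Q" for q
      proof -
        have "fst q < N" "snd q < N" using that by (auto simp: Q_def)
        then show ?thesis unfolding h_def g_def
          by (intro continuous_intros cont)
      qed
      show "h q a \<le> D0^2" if "q \<in> Q" for q
      proof -
        have "fst q < N" "snd q < N" using that by (auto simp: Q_def)
        then have "norm (x (fst q) a - x (snd q) a) \<le> D0" unfolding D0_def by (rule diam_ge)
        then have "(norm (x (fst q) a - x (snd q) a))^2 \<le> D0^2" by (simp add: power_mono)
        then show ?thesis by (simp add: h_def gn)
      qed
      show "\<exists>D<0. (h q has_real_derivative D) (at t)"
        if t: "t \<in> {a<..<b}" and q: "q \<in> Q" and mx: "\<forall>q'\<in>Q. h q' t \<le> h q t" for t q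
      proof -
        obtain i k where ik: "q = (i,k)" "i < N" "k < N" using q by (auto simp: Q_def)
        have gmax: "g q' t \<le> g q t" if "q' \<in> Q" for q'
          using mx that by (auto simp: h_def)
        have nmax: "\<forall>i'<N. \<forall>k'<N. norm (x i' t - x k' t) \<le> norm (x i t - x k t)"
        proof (intro allI impI)
          fix i' k' assume "i' < N" "k' < N"
          then have "g (i',k') t \<le> g q t" using gmax by (auto simp: Q_def)
          then have "(norm (x i' t - x k' t))^2 \<le> (norm (x i t - x k t))^2" by (simp add: gn ik)
          then show "norm (x i' t - x k' t) \<le> norm (x i t - x k t)"
            by (rule power2_le_imp_le) simp
        qed
        have kk: "(x i t - x k t) \<bullet> (v i t - v k t) \<le> lam * g q t"
          using key[OF t ik(2,3) nmax] by (simp add: gn ik)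
        have dy: "((\<lambda>s. x i s - x k s) has_vector_derivative (v i t - v k t)) (at t)"
          by (intro has_vector_derivative_diff der ik t)
        have dg: "(g q has_real_derivative (2 * ((x i t - x k t) \<bullet> (v i t - v k t)))) (at t)"
          unfolding g_def ik fst_conv snd_conv by (rule inner_self_deriv[OF dy])
        have de: "((\<lambda>s. exp (-2*lam*(s-a))) has_real_derivative (exp (-2*lam*(t-a)) * (-2*lam))) (at t)"
          by (auto intro!: derivative_eq_intros)
        have dl: "((\<lambda>s. eps*(s-a)) has_real_derivative eps) (at t)"
          by (auto intro!: derivative_eq_intros)
        define E where "E = exp (-2*lam*(t-a))"
        have "(h q has_real_derivative
               (E * (-2*lam) * g q t + 2 * ((x i t - x k t) \<bullet> (v i t - v k t)) * E - eps)) (at t)"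
          unfolding h_def E_def by (intro DERIV_diff DERIV_mult de dg dl)
        moreover have "E * (-2*lam) * g q t + 2 * ((x i t - x k t) \<bullet> (v i t - v k t)) * E - eps < 0"
        proof -
          have "E > 0" by (simp add: E_def)
          then have "2 * ((x i t - x k t) \<bullet> (v i t - v k t)) * E \<le> 2 * (lam * g q t) * E"
            using kk by simp
          then show ?thesis using eps by (simp add: algebra_simps)
        qed
        ultimately show ?thesis by blast
      qed
    qed
    then have "h q b \<le> D0^2" using q by blast
    then show ?thesis by (simp add: h_def)
  qed
  show ?thesis unfolding D0_def[symmetric]
  proof (rule diam_le[OF N])
    fix i j assume ij: "i < N" "j < N"
    then have qQ: "(i,j) \<in> Q" by (simp add: Q_def)
    have le: "exp (-2*lam*(b-a)) * g (i,j) b \<le> D0^2"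
    proof (rule field_le_epsilon)
      fix e :: real assume e: "e > 0"
      have "exp (-2*lam*(b-a)) * g (i,j) b \<le> D0^2 + (e/(b-a+1))*(b-a)"
        using main[OF qQ, of "e/(b-a+1)"] e ab by simp
      also have "(e/(b-a+1))*(b-a) \<le> e"
        using e ab by (simp add: field_simps)
      finally show "exp (-2*lam*(b-a)) * g (i,j) b \<le> D0^2 + e" by simp
    qed
    have "g (i,j) b = exp (2*lam*(b-a)) * (exp (-2*lam*(b-a)) * g (i,j) b)"
      by (simp add: exp_minus_inverse mult.assoc[symmetric] flip: exp_add)
    also have "\<dots> \<le> exp (2*lam*(b-a)) * D0^2" using le by simp
    also have "\<dots> = (exp (lam*(b-a)) * D0)^2"
      by (simp add: power_mult_distrib flip: exp_of_nat_mult)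
    finally have "(norm (x i b - x j b))^2 \<le> (exp (lam*(b-a)) * D0)^2" by (simp add: gn)
    then show "norm (x i b - x j b) \<le> exp (lam*(b-a)) * D0"
      by (rule power2_le_imp_le) (use D0 in simp)
  qed
qed



lemma sum_drop_self:
  fixes y :: "nat \<Rightarrow> 'a::real_vector"
  assumes "l < N"
  shows "(\<Sum>j\<in>{j. j<N \<and> j\<noteq>l}. c j *\<^sub>R (y j - y l)) = (\<Sum>j<N. c j *\<^sub>R (y j - y l))"
proof -
  have "(\<Sum>j<N. c j *\<^sub>R (y j - y l)) = c l *\<^sub>R (y l - y l) + (\<Sum>j\<in>{..<N} - {l}. c j *\<^sub>R (y j - y l))"
    using assms by (subst sum.remove[of _ l]) auto
  moreover have "{..<N} - {l} = {j. j<N \<and> j\<noteq>l}" by auto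
  ultimately show ?thesis by simp
qed

lemma expand_inner:
  fixes y :: "nat \<Rightarrow> 'a::real_inner"
  assumes "i < N" "k < N"
  shows "(y i - y k) \<bullet> ((1/(real N - 1)) *\<^sub>R (\<Sum>j\<in>{j. j<N \<and> j\<noteq>i}. c i j *\<^sub>R (y j - y i))
          - (1/(real N - 1)) *\<^sub>R (\<Sum>j\<in>{j. j<N \<and> j\<noteq>k}. c k j *\<^sub>R (y j - y k)))
        = (1/(real N - 1)) * (\<Sum>j<N. c i j * ((y i - y k) \<bullet> (y j - y i)) - c k j * ((y i - y k) \<bullet> (y j - y k)))"
proof -
  have e: "(y i - y k) \<bullet> (\<Sum>j<N. c l j *\<^sub>R (y j - y l)) = (\<Sum>j<N. c l j * ((y i - y k) \<bullet> (y j - y l)))" for l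
    by (simp add: inner_sum_right inner_scaleR_right)
  show ?thesis
    using assms
    by (simp only: sum_drop_self inner_diff_right inner_scaleR_right e sum_subtractf right_diff_distrib)
qed

lemma A_nonpos:
  fixes a b c :: "'a::real_inner"
  assumes "norm (c - b) \<le> norm (a - b)"
  shows "(a - b) \<bullet> (c - a) \<le> 0"
proof -
  have 1: "(norm (c - b))^2 \<le> (norm (a - b))^2" using assms by (simp add: power_mono)
  have e: "(a - b) + (c - a) = c - b" by simp
  have 2: "(a - b) \<bullet> (c - a) = ((norm (c - b))^2 - (norm (a - b))^2 - (norm (c - a))^2) / 2"
    using dot_norm[of "a - b" "c - a"] unfolding e .
  have 3: "(norm (c - a))^2 \<ge> 0" by simp
  have aux: "X = (P - Q - R) / 2 \<Longrightarrow> P \<le> Q \<Longrightarrow> R \<ge> 0 \<Longrightarrow> X \<le> 0" for X P Q R :: real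
    by (simp add: field_simps)
  from aux[OF 2 1 3] show ?thesis .
qed

lemma B_nonneg:
  fixes a b c :: "'a::real_inner"
  assumes "norm (a - c) \<le> norm (a - b)"
  shows "(a - b) \<bullet> (c - b) \<ge> 0"
proof -
  have 1: "(norm (a - c))^2 \<le> (norm (a - b))^2" using assms by (simp add: power_mono)
  have e: "(a - b) - (c - b) = a - c" by simp
  have 2: "(a - b) \<bullet> (c - b) = (((norm (a - b))^2 + (norm (c - b))^2) - (norm (a - c))^2) / 2"
    using dot_norm_neg[of "a - b" "c - b"] unfolding e .
  have 3: "(norm (c - b))^2 \<ge> 0" by simp
  have aux: "X = ((Q + R) - P) / 2 \<Longrightarrow> P \<le> Q \<Longrightarrow> R \<ge> 0 \<Longrightarrow> X \<ge> 0" for X P Q R :: real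
    by (simp add: field_simps)
  from aux[OF 2 1 3] show ?thesis .
qed

lemma geom_pos:
  fixes y :: "nat \<Rightarrow> 'a::real_inner"
  assumes N: "N \<ge> 2" and ik: "i<N" "k<N"
    and mx: "\<forall>i'<N. \<forall>k'<N. norm (y i' - y k') \<le> norm (y i - y k)"
    and ps: "\<And>j. j<N \<Longrightarrow> c i j \<ge> p \<and> c k j \<ge> p" and p: "p \<ge> 0"
  shows "(y i - y k) \<bullet> ((1/(real N - 1)) *\<^sub>R (\<Sum>j\<in>{j. j<N \<and> j\<noteq>i}. c i j *\<^sub>R (y j - y i))
          - (1/(real N - 1)) *\<^sub>R (\<Sum>j\<in>{j. j<N \<and> j\<noteq>k}. c k j *\<^sub>R (y j - y k)))
        \<le> - p * (norm (y i - y k))^2"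
proof -
  define g where "g = (norm (y i - y k))^2"
  have gi: "g = (y i - y k) \<bullet> (y i - y k)" by (simp add: g_def power2_norm_eq_inner)
  have tm: "c i j * ((y i - y k) \<bullet> (y j - y i)) - c k j * ((y i - y k) \<bullet> (y j - y k)) \<le> - p * g"
    if j: "j < N" for j
  proof -
    have A: "(y i - y k) \<bullet> (y j - y i) \<le> 0" using A_nonpos[of "y j" "y k" "y i"] mx j ik by blast
    have B: "(y i - y k) \<bullet> (y j - y k) \<ge> 0" using B_nonneg[of "y i" "y j" "y k"] mx j ik by blast
    have AB: "(y i - y k) \<bullet> (y j - y i) - (y i - y k) \<bullet> (y j - y k) = - g"
      by (simp add: gi inner_diff_right)
    have "c i j * ((y i - y k) \<bullet> (y j - y i)) \<le> p * ((y i - y k) \<bullet> (y j - y i))"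
      using A ps[OF j] by (intro mult_right_mono_neg) auto
    moreover have "c k j * ((y i - y k) \<bullet> (y j - y k)) \<ge> p * ((y i - y k) \<bullet> (y j - y k))"
      using B ps[OF j] by (intro mult_right_mono) auto
    moreover have "p * ((y i - y k) \<bullet> (y j - y i)) - p * ((y i - y k) \<bullet> (y j - y k)) = - p * g"
      using AB by (metis mult_minus_right right_diff_distrib mult.commute)
    ultimately show ?thesis by linarith
  qed
  have "(\<Sum>j<N. c i j * ((y i - y k) \<bullet> (y j - y i)) - c k j * ((y i - y k) \<bullet> (y j - y k))) \<le> (\<Sum>j<N. - p * g)"
    by (rule sum_mono) (use tm in auto)
  also have "\<dots> = - (real N * p * g)" by simp
  finally have S: "(\<Sum>j<N. c i j * ((y i - y k) \<bullet> (y j - y i)) - c k j * ((y i - y k) \<bullet> (y j - y k))) \<le> - (real N * p * g)" .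
  have N1: "real N - 1 > 0" using N by simp
  have g0: "g \<ge> 0" by (simp add: g_def)
  have "(1/(real N - 1)) * (\<Sum>j<N. c i j * ((y i - y k) \<bullet> (y j - y i)) - c k j * ((y i - y k) \<bullet> (y j - y k)))
        \<le> (1/(real N - 1)) * (- (real N * p * g))"
    using S N1 by (intro mult_left_mono) auto
  also have "\<dots> \<le> - p * g"
  proof -
    have "p * g * (real N - 1) \<le> real N * p * g" using p g0 by (simp add: algebra_simps)
    then show ?thesis using N1 by (simp add: field_simps)
  qed
  finally show ?thesis using expand_inner[OF ik, of y c] by (simp add: g_def)
qed

lemma geom_neg:
  fixes y :: "nat \<Rightarrow> 'a::real_inner"
  assumes N: "N \<ge> 2" and ik: "i<N" "k<N"
    and mx: "\<forall>i'<N. \<forall>k'<N. norm (y i' - y k') \<le> norm (y i - y k)"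
    and ps: "\<And>j. j<N \<Longrightarrow> - c i j \<le> K \<and> - c k j \<le> K" and K: "K \<ge> 0"
  shows "(y i - y k) \<bullet> ((1/(real N - 1)) *\<^sub>R (\<Sum>j\<in>{j. j<N \<and> j\<noteq>i}. c i j *\<^sub>R (y j - y i))
          - (1/(real N - 1)) *\<^sub>R (\<Sum>j\<in>{j. j<N \<and> j\<noteq>k}. c k j *\<^sub>R (y j - y k)))
        \<le> 2 * K * (norm (y i - y k))^2"
proof -
  define g where "g = (norm (y i - y k))^2"
  have gi: "g = (y i - y k) \<bullet> (y i - y k)" by (simp add: g_def power2_norm_eq_inner)
  have tm: "c i j * ((y i - y k) \<bullet> (y j - y i)) - c k j * ((y i - y k) \<bullet> (y j - y k)) \<le> K * g"
    if j: "j < N" for j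
  proof -
    have A: "(y i - y k) \<bullet> (y j - y i) \<le> 0" using A_nonpos[of "y j" "y k" "y i"] mx j ik by blast
    have B: "(y i - y k) \<bullet> (y j - y k) \<ge> 0" using B_nonneg[of "y i" "y j" "y k"] mx j ik by blast
    have AB: "(y i - y k) \<bullet> (y j - y i) - (y i - y k) \<bullet> (y j - y k) = - g"
      by (simp add: gi inner_diff_right)
    have "(- c i j) * (- ((y i - y k) \<bullet> (y j - y i))) \<le> K * (- ((y i - y k) \<bullet> (y j - y i)))"
      using A ps[OF j] by (intro mult_right_mono) auto
    moreover have "(- c k j) * ((y i - y k) \<bullet> (y j - y k)) \<le> K * ((y i - y k) \<bullet> (y j - y k))"
      using B ps[OF j] by (intro mult_right_mono) auto
    moreover have "K * (- ((y i - y k) \<bullet> (y j - y i))) + K * ((y i - y k) \<bullet> (y j - y k)) = K * g"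
      using AB by (metis minus_diff_eq mult_minus_right right_diff_distrib add.commute diff_minus_eq_add minus_minus distrib_left)
    ultimately show ?thesis by (simp add: algebra_simps)
  qed
  have "(\<Sum>j<N. c i j * ((y i - y k) \<bullet> (y j - y i)) - c k j * ((y i - y k) \<bullet> (y j - y k))) \<le> (\<Sum>j<N. K * g)"
    by (rule sum_mono) (use tm in auto)
  also have "\<dots> = real N * K * g" by simp
  finally have S: "(\<Sum>j<N. c i j * ((y i - y k) \<bullet> (y j - y i)) - c k j * ((y i - y k) \<bullet> (y j - y k))) \<le> real N * K * g" .
  have N1: "real N - 1 > 0" using N by simp
  have g0: "g \<ge> 0" by (simp add: g_def)
  have "(1/(real N - 1)) * (\<Sum>j<N. c i j * ((y i - y k) \<bullet> (y j - y i)) - c k j * ((y i - y k) \<bullet> (y j - y k)))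
        \<le> (1/(real N - 1)) * (real N * K * g)"
    using S N1 by (intro mult_left_mono) auto
  also have "\<dots> \<le> 2 * K * g"
  proof -
    have "real N * K * g \<le> 2 * K * g * (real N - 1)"
    proof -
      have n2: "real N \<le> 2 * (real N - 1)" using N by simp
      have "real N * (K * g) \<le> 2 * (real N - 1) * (K * g)" using mult_right_mono[OF n2, of "K*g"] K g0 by simp
      then show ?thesis by (simp add: algebra_simps)
    qed
    then show ?thesis using N1 by (simp add: field_simps)
  qed
  finally show ?thesis using expand_inner[OF ik, of y c] by (simp add: g_def)
qed

lemma alpha_pos:
  assumes mono: "mono tt" and t0: "tt 0 = 0" and s: "s \<in> {tt (2*n)<..<tt (2*n+1)}"
  shows "alpha tt s = 1"
proof -
  have "tt 0 \<le> tt (2*n)" by (rule monoD[OF mono]) simp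
  then have s0: "s \<noteq> 0" using s t0 by auto
  have nm: "\<not> (tt (2*m+1) \<le> s \<and> s \<le> tt (2*m+2))" for m
  proof (cases "m < n")
    case True
    then have "tt (2*m+2) \<le> tt (2*n)" by (intro monoD[OF mono]) simp
    then show ?thesis using s by (simp add: not_le)
  next
    case False
    then have "tt (2*n+1) \<le> tt (2*m+1)" by (intro monoD[OF mono]) simp
    then show ?thesis using s by (simp add: not_le)
  qed
  then have "\<not> (\<exists>m. tt (2*m+1) \<le> s \<and> s \<le> tt (2*m+2))" by blast
  then show ?thesis unfolding alpha_def using s0 by simp
qed

lemma alpha_neg:
  assumes mono: "mono tt" and t0: "tt 0 = 0" and s: "s \<in> {tt (2*n+1)<..<tt (2*n+2)}"
  shows "alpha tt s = -1"
proof -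
  have "tt 0 \<le> tt (2*n+1)" by (rule monoD[OF mono]) simp
  then have s0: "s \<noteq> 0" using s t0 by auto
  have "\<exists>m. tt (2*m+1) \<le> s \<and> s \<le> tt (2*m+2)" using s by (intro exI[of _ n]) auto
  then show ?thesis unfolding alpha_def using s0 by simp
qed

lemma phase_pos:
  fixes x :: "nat \<Rightarrow> real \<Rightarrow> real^'d"
  assumes N: "N \<ge> 2" and mono: "mono tt" and t0: "tt 0 = 0" and sol: "is_solution N tt psi x"
    and ab: "tt (2*n) \<le> a" "a \<le> b" "b \<le> tt (2*n+1)"
    and p: "p \<ge> 0"
    and hp: "\<And>s i j. s\<in>{a<..<b} \<Longrightarrow> i<N \<Longrightarrow> j<N \<Longrightarrow> psi (norm (x i s - x j s)) \<ge> p"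
  shows "diam N x b \<le> exp (-p*(b-a)) * diam N x a"
proof -
  have "tt 0 \<le> tt (2*n)" by (rule monoD[OF mono]) simp
  then have a0: "a \<ge> 0" using ab t0 by auto
  have "diam N x b \<le> exp ((-p)*(b-a)) * diam N x a"
  proof (rule diam_growth[where v = "rhs N tt psi x"])
    show "N \<ge> 1" using N by simp
    show "a \<le> b" using ab by simp
    show "continuous_on {a..b} (x i)" if "i < N" for i
      using sol that a0 unfolding is_solution_def by (auto intro: continuous_on_subset)
    show "(x i has_vector_derivative rhs N tt psi x i t) (at t)" if "i < N" "t \<in> {a<..<b}" for i t
    proof -
      have "t \<in> {tt (2*n)<..<tt (Suc (2*n))}" using that ab by auto
      then show ?thesis using sol that unfolding is_solution_def by blast
    qed
    fix t i k
    assume t: "t \<in> {a<..<b}" and ik: "i < N" "k < N"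
      and mx: "\<forall>i'<N. \<forall>k'<N. norm (x i' t - x k' t) \<le> norm (x i t - x k t)"
    have al: "alpha tt t = 1" using t ab by (intro alpha_pos[OF mono t0, of t n]) auto
    have r: "rhs N tt psi x l t = (1/(real N - 1)) *\<^sub>R (\<Sum>j\<in>{j. j<N \<and> j\<noteq>l}. psi (norm (x l t - x j t)) *\<^sub>R (x j t - x l t))" for l
      by (simp add: rhs_def al)
    show "(x i t - x k t) \<bullet> (rhs N tt psi x i t - rhs N tt psi x k t) \<le> (-p) * (norm (x i t - x k t))^2"
      unfolding r
      apply (rule geom_pos[OF N ik, where y="\<lambda>j. x j t" and c="\<lambda>l j. psi (norm (x l t - x j t))"])
      using mx hp[OF t] ik p by auto
  qed
  then show ?thesis by simp
qed

lemma phase_neg: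
  fixes x :: "nat \<Rightarrow> real \<Rightarrow> real^'d"
  assumes N: "N \<ge> 2" and mono: "mono tt" and t0: "tt 0 = 0" and sol: "is_solution N tt psi x"
    and ab: "tt (2*n+1) \<le> a" "a \<le> b" "b \<le> tt (2*n+2)"
    and K: "K \<ge> 0" and hK: "\<And>y. psi y \<le> K"
  shows "diam N x b \<le> exp (2*K*(b-a)) * diam N x a"
proof -
  have "tt 0 \<le> tt (2*n+1)" by (rule monoD[OF mono]) simp
  then have a0: "a \<ge> 0" using ab t0 by auto
  show ?thesis
  proof (rule diam_growth[where v = "rhs N tt psi x"])
    show "N \<ge> 1" using N by simp
    show "a \<le> b" using ab by simp
    show "continuous_on {a..b} (x i)" if "i < N" for i
      using sol that a0 unfolding is_solution_def by (auto intro: continuous_on_subset)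
    show "(x i has_vector_derivative rhs N tt psi x i t) (at t)" if "i < N" "t \<in> {a<..<b}" for i t
    proof -
      have "t \<in> {tt (2*n+1)<..<tt (Suc (2*n+1))}" using that ab by auto
      then show ?thesis using sol that unfolding is_solution_def by blast
    qed
    fix t i k
    assume t: "t \<in> {a<..<b}" and ik: "i < N" "k < N"
      and mx: "\<forall>i'<N. \<forall>k'<N. norm (x i' t - x k' t) \<le> norm (x i t - x k t)"
    have al: "alpha tt t = -1" using t ab by (intro alpha_neg[OF mono t0, of t n]) auto
    have r: "rhs N tt psi x l t = (1/(real N - 1)) *\<^sub>R (\<Sum>j\<in>{j. j<N \<and> j\<noteq>l}. (- psi (norm (x l t - x j t))) *\<^sub>R (x j t - x l t))" for l
      by (simp add: rhs_def al)
    show "(x i t - x k t) \<bullet> (rhs N tt psi x i t - rhs N tt psi x k t) \<le> (2*K) * (norm (x i t - x k t))^2"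
      unfolding r
      apply (rule geom_neg[OF N ik, where y="\<lambda>j. x j t" and c="\<lambda>l j. - psi (norm (x l t - x j t))"])
      using mx hK ik K by auto
  qed
qed

lemma exp_bound_neg:
  fixes z :: real
  assumes "0 \<le> z" "z < ln 2"
  shows "exp (2*z) \<le> exp z / (2 - exp z)"
proof -
  define u where "u = exp z"
  have u1: "u \<ge> 1" using assms by (simp add: u_def)
  have u2: "u < 2" using assms unfolding u_def by (metis exp_less_mono exp_ln zero_less_numeral)
  have e: "u * (2 - u) = 1 - (u-1)^2" by (simp add: power2_eq_square algebra_simps)
  have "u * (2 - u) \<le> 1" unfolding e by simp
  then have "u * (u * (2 - u)) \<le> u * 1" using u1 by (intro mult_left_mono) auto
  then have "u * u * (2 - u) \<le> u" by (simp add: mult.assoc)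
  then have "u * u \<le> u / (2 - u)" using u2 by (simp add: field_simps)
  moreover have "exp (2*z) = u * u" by (simp add: u_def flip: exp_add)
  ultimately show ?thesis by (simp add: u_def)
qed

lemma convex_bound:
  fixes w y :: real
  assumes "0 \<le> w" "w \<le> 1"
  shows "exp (- (w*y)) \<le> 1 - w * (1 - exp (-y))"
proof -
  have "exp ((1 - w) *\<^sub>R 0 + w *\<^sub>R (-y)) \<le> (1 - w) * exp 0 + w * exp (-y)"
    using convex_onD[OF exp_convex, of w 0 "-y"] assms by simp
  then show ?thesis by (simp add: algebra_simps)
qed

lemma lr_bound:
  fixes z :: real
  assumes "0 \<le> z" "z \<le> ln (3/2)"
  shows "ln (exp z / (2 - exp z)) \<le> 6*z"
proof -
  define u where "u = exp z"
  have u1: "u \<ge> 1" using assms by (simp add: u_def)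
  have u2: "u \<le> 3/2" using assms unfolding u_def by (metis exp_le_cancel_iff exp_ln zero_less_divide_iff zero_less_numeral)
  have pos: "u / (2 - u) > 0" using u1 u2 by simp
  have "ln (u / (2 - u)) \<le> u / (2 - u) - 1" by (rule ln_le_minus_one[OF pos])
  also have "\<dots> = 2 * (u - 1) / (2 - u)" using u2 by (simp add: field_simps)
  also have "\<dots> \<le> 4 * (u - 1)"
  proof -
    have "(u - 1) * 2 \<le> (u - 1) * (4 * (2 - u))" using u1 u2 by (intro mult_left_mono) auto
    then have "2 * (u - 1) \<le> 4 * (u - 1) * (2 - u)" by (simp add: algebra_simps)
    then show ?thesis using u2 by (simp add: pos_divide_le_eq)
  qed
  also have "u - 1 \<le> z * u"
  proof -
    have "1 + (-z) \<le> exp (-z)" by (rule exp_ge_add_one_self)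
    then have "(1 - z) * u \<le> exp (-z) * exp z" using u1 by (simp add: u_def mult_right_mono)
    then show ?thesis by (simp add: u_def algebra_simps flip: exp_add)
  qed
  then have "4 * (u - 1) \<le> 4 * (z * u)" by simp
  also have "\<dots> \<le> 6 * z"
  proof -
    have "z * u \<le> z * (3/2)" using u2 assms(1) by (intro mult_left_mono) auto
    then show ?thesis by (simp add: mult.commute)
  qed
  finally show ?thesis by (simp add: u_def)
qed



theorem theorem5p2:
  fixes psi :: "real \<Rightarrow> real" and tt :: "nat \<Rightarrow> real" and D0 :: real
  defines "K \<equiv> (SUP y. psi y)"
  defines "M0 \<equiv> exp (\<Sum>p. ln (exp (K * (tt (2*p+2) - tt (2*p+1)))
                              / (2 - exp (K * (tt (2*p+2) - tt (2*p+1)))))) * D0"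
  defines "psi0 \<equiv> (INF y\<in>{-M0..M0}. psi y)"
  defines "f \<equiv> (\<lambda>n. exp (K * (tt (2*n+2) - tt (2*n+1))) / (2 - exp (K * (tt (2*n+2) - tt (2*n+1))))
                  * max (1 - exp (- K * (tt (2*n+1) - tt (2*n))))
                        (1 - psi0 / K * (1 - exp (- K * (tt (2*n+1) - tt (2*n))))))"
  assumes psi_pos: "\<And>y. psi y > 0"
    and psi_bdd: "bdd_above (range psi)"
    and psi_cont: "continuous_on UNIV psi"
    and t_mono: "mono tt"
    and t0: "tt 0 = 0"
    and t_lim: "filterlim tt at_top sequentially"
    and short: "\<And>n. tt (2*n+2) - tt (2*n+1) < ln 2 / K"
    and summ: "summable (\<lambda>p. tt (2*p+2) - tt (2*p+1))"
    and f_bdd: "bdd_above (range f)"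
    and c_lt: "(SUP n. f n) < 1"
  shows "\<exists>\<gamma>>0. \<exists>T>0. \<forall>N::nat. \<forall>x :: nat \<Rightarrow> real \<Rightarrow> real^'d.
           N \<ge> 2 \<and> is_solution N tt psi x \<and> diam N x 0 = D0 \<longrightarrow>
           (\<forall>s\<ge>0. diam N x s \<le> exp (- \<gamma> * (s - ln 2 / K - T)) * diam N x 0)"
proof -
  have psiK: "psi y \<le> K" for y
    unfolding K_def using psi_bdd by (intro cSUP_upper) auto
  have Kpos: "K > 0" using psiK[of 0] psi_pos[of 0] by linarith
  define tau where "tau p = tt (2*p+2) - tt (2*p+1)" for p
  define del where "del p = tt (2*p+1) - tt (2*p)" for p
  have tau0: "tau p \<ge> 0" for p unfolding tau_def using monoD[OF t_mono, of "2*p+1" "2*p+2"] by simp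
  have del0: "del p \<ge> 0" for p unfolding del_def using monoD[OF t_mono, of "2*p" "2*p+1"] by simp
  have Ktau: "K * tau p < ln 2" for p
    using short[of p] Kpos unfolding tau_def by (simp add: pos_less_divide_eq mult.commute)
  have Ktau0: "K * tau p \<ge> 0" for p using Kpos tau0[of p] by simp
  have e2: "exp (2*K*tau p) \<le> exp (K*tau p) / (2 - exp (K*tau p))" for p
    using exp_bound_neg[OF Ktau0[of p] Ktau[of p]] by (simp add: mult.assoc)
  have u2: "exp (K*tau p) < 2" for p
    using Ktau[of p] by (metis exp_less_mono exp_ln zero_less_numeral)
  have e2ge1: "exp (2*K*tau p) \<ge> 1" for p using Ktau0[of p] by simp
  define c where "c = (SUP n. f n)"
  define c' where "c' = max c (1/2)"
  have c'1: "c' < 1" using c_lt by (simp add: c'_def c_def)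
  have c'h: "c' \<ge> 1/2" by (simp add: c'_def)
  have fle: "f n \<le> c'" for n
  proof -
    have "f n \<le> c" unfolding c_def using f_bdd by (intro cSUP_upper) auto
    then show ?thesis by (simp add: c'_def)
  qed
  have f_eq: "f n = exp (K*tau n) / (2 - exp (K*tau n)) *
       max (1 - exp (- K * del n)) (1 - psi0 / K * (1 - exp (- K * del n)))" for n
    by (simp add: f_def tau_def del_def)
  have fge: "1 - exp (- K * del n) \<le> f n" for n
  proof -
    have A0: "1 - exp (- K * del n) \<ge> 0" using Kpos del0[of n] by simp
    have r1: "exp (K*tau n) / (2 - exp (K*tau n)) \<ge> 1" using e2[of n] e2ge1[of n] by linarith
    have gen: "A \<le> R * max A Bv" if "R \<ge> 1" "A \<ge> 0" for R A Bv :: real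
    proof -
      have m0: "max A Bv \<ge> 0" using that by simp
      have "1 * max A Bv \<le> R * max A Bv" by (rule mult_right_mono[OF that(1) m0])
      then show ?thesis by simp
    qed
    show ?thesis unfolding f_eq[of n] by (rule gen[OF r1 A0])
  qed
  define B where "B = - ln (1 - c') / K"
  have delB: "del n \<le> B" for n
  proof -
    have "exp (- K * del n) \<ge> 1 - c'" using fge[of n] fle[of n] by linarith
    moreover have "1 - c' > 0" using c'1 by simp
    ultimately have "ln (1 - c') \<le> ln (exp (- K * del n))" by (simp only: ln_le_cancel_iff exp_gt_zero)
    then have "ln (1 - c') \<le> - K * del n" by simp
    then have "K * del n \<le> - ln (1 - c')" by simp
    then have "(K * del n) / K \<le> (- ln (1 - c')) / K" using Kpos by (intro divide_right_mono) auto
    then show ?thesis unfolding B_def using Kpos by simp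
  qed
  define L where "L = B + ln 2 / K"
  have B0: "B \<ge> 0" using delB[of 0] del0[of 0] by linarith
  have "ln 2 / K > 0" using Kpos by simp
  then have Lpos: "L > 0" unfolding L_def using B0 by linarith
  have ttL: "tt (2*n) \<le> real n * L" for n
  proof (induction n)
    case 0 then show ?case using t0 by simp
  next
    case (Suc n)
    have "tt (2 * Suc n) = tt (2*n) + del n + tau n" by (simp add: del_def tau_def)
    also have "\<dots> \<le> real n * L + B + ln 2 / K"
      using Suc delB[of n] short[of n] unfolding tau_def by linarith
    moreover have "real (Suc n) * L = real n * L + L" by (simp add: distrib_right)
    ultimately show ?case unfolding L_def by linarith
  qed
  have c'pos: "c' > 0" using c'h by simp
  define gam where "gam = - ln c' / L"
  have lnc: "ln c' < 0" using c'1 c'pos by simp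
  have gpos: "gam > 0" unfolding gam_def using lnc Lpos by (simp add: divide_less_0_iff)
  define T where "T = ln (4 / c') / gam"
  have "4 / c' > 1" using c'1 c'pos by (simp add: field_simps)
  then have "ln (4 / c') > 0" by (rule ln_gt_zero)
  then have Tpos: "T > 0" unfolding T_def using gpos by (simp add: divide_pos_pos)
  have main: "diam N x s \<le> exp (- gam * (s - ln 2 / K - T)) * diam N x 0"
    if N: "N \<ge> 2" and sol: "is_solution N tt psi x" and d0: "diam N x 0 = D0" and s0: "s \<ge> 0"
    for N and x :: "nat \<Rightarrow> real \<Rightarrow> real^'d" and s
  proof -
    have D0: "D0 \<ge> 0" using diam_nonneg[of N x 0] N d0 by simp
    have dnn: "diam N x t \<ge> 0" for t using diam_nonneg[of N x t] N by simp
    define lr where "lr p = ln (exp (K*tau p) / (2 - exp (K*tau p)))" for p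
    have lr0: "lr p \<ge> 0" for p
    proof -
      have "exp (K*tau p) / (2 - exp (K*tau p)) \<ge> 1" using e2[of p] e2ge1[of p] by linarith
      then show ?thesis unfolding lr_def by simp
    qed
    have lrK: "2*K*tau p \<le> lr p" for p
    proof -
      have "ln (exp (2*K*tau p)) \<le> ln (exp (K*tau p) / (2 - exp (K*tau p)))"
        using e2[of p] u2[of p] by (subst ln_le_cancel_iff) auto
      then show ?thesis unfolding lr_def by simp
    qed
    have summ_lr: "summable lr"
    proof -
      have "summable tau" using summ unfolding tau_def by simp
      then have "tau \<longlonglongrightarrow> 0" by (rule summable_LIMSEQ_zero)
      moreover have "ln (3/2) / K > 0" using Kpos by simp
      ultimately have ev: "eventually (\<lambda>p. tau p < ln (3/2) / K) sequentially"
        by (rule order_tendstoD(2))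
      have "eventually (\<lambda>p. norm (lr p) \<le> 6 * K * tau p) sequentially"
        using ev
      proof (rule eventually_mono)
        fix p assume "tau p < ln (3/2) / K"
        then have "K * tau p \<le> ln (3/2)" using Kpos by (simp add: pos_less_divide_eq mult.commute)
        then have "lr p \<le> 6 * (K * tau p)" unfolding lr_def by (rule lr_bound[OF Ktau0])
        then show "norm (lr p) \<le> 6 * K * tau p" using lr0[of p] by simp
      qed
      moreover have "summable (\<lambda>p. 6 * K * tau p)"
        using \<open>summable tau\<close> by (rule summable_mult)
      ultimately show ?thesis by (rule summable_comparison_test_ev)
    qed
    have lr_eq: "(\<lambda>p. ln (exp (K * (tt (2*p+2) - tt (2*p+1))) / (2 - exp (K * (tt (2*p+2) - tt (2*p+1)))))) = lr"
      by (simp add: fun_eq_iff lr_def tau_def)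
    have M0eq: "M0 = exp (suminf lr) * D0" unfolding M0_def lr_eq ..
    have M0pos: "M0 \<ge> 0" using M0eq D0 by simp
    have bb: "bdd_below (psi ` A)" for A
      using psi_pos by (intro bdd_belowI[of _ 0]) (auto intro: less_imp_le)
    have psi0_le: "psi0 \<le> psi r" if "r \<in> {-M0..M0}" for r
      unfolding psi0_def using that bb by (intro cINF_lower) auto
    have psi0_nn: "psi0 \<ge> 0"
      unfolding psi0_def using M0pos psi_pos by (intro cINF_greatest) (auto intro: less_imp_le)
    have psi0_K: "psi0 \<le> K" using psi0_le[of 0] M0pos psiK[of 0] by simp
    have posmono: "diam N x b \<le> diam N x a"
      if "tt (2*n) \<le> a" "a \<le> b" "b \<le> tt (2*n+1)" for n a b
    proof -
      have "diam N x b \<le> exp (- 0 * (b - a)) * diam N x a"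
        by (rule phase_pos[OF N t_mono t0 sol, of n a b 0]) (use that psi_pos in \<open>auto intro: less_imp_le\<close>)
      then show ?thesis by simp
    qed
    have negb: "diam N x b \<le> exp (2*K*(b-a)) * diam N x a"
      if "tt (2*n+1) \<le> a" "a \<le> b" "b \<le> tt (2*n+2)" for n a b
      by (rule phase_neg[OF N t_mono t0 sol, of n a b K]) (use that Kpos psiK in \<open>auto\<close>)
    have m1: "tt (2*n) \<le> tt (2*n+1)" for n using del0[of n] by (simp add: del_def)
    have m2: "tt (2*n+1) \<le> tt (2*n+2)" for n using tau0[of n] by (simp add: tau_def)
    have step_neg: "diam N x (tt (2*n+2)) \<le> exp (2*K*tau n) * diam N x (tt (2*n+1))" for n
      using negb[of n "tt (2*n+1)" "tt (2*n+2)"] m2[of n] by (simp add: tau_def)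
    have I1: "diam N x (tt (2*n)) \<le> exp (2*K*(\<Sum>p<n. tau p)) * D0" for n
    proof (induction n)
      case 0 then show ?case using t0 d0 by simp
    next
      case (Suc n)
      have "diam N x (tt (2 * Suc n)) = diam N x (tt (2*n+2))" by simp
      also have "\<dots> \<le> exp (2*K*tau n) * diam N x (tt (2*n+1))" by (rule step_neg)
      also have "\<dots> \<le> exp (2*K*tau n) * diam N x (tt (2*n))"
        by (rule mult_left_mono) (use posmono[of n "tt (2*n)" "tt (2*n+1)"] m1[of n] in \<open>auto\<close>)
      also have "\<dots> \<le> exp (2*K*tau n) * (exp (2*K*(\<Sum>p<n. tau p)) * D0)"
        by (rule mult_left_mono) (use Suc in \<open>auto\<close>)
      also have "\<dots> = exp (2*K*(\<Sum>p<Suc n. tau p)) * D0"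
        by (simp add: algebra_simps flip: exp_add)
      finally show ?case .
    qed
    have I1': "diam N x (tt (2*n)) \<le> M0" for n
    proof -
      have "2*K*(\<Sum>p<n. tau p) = (\<Sum>p<n. 2*K*tau p)" by (simp add: sum_distrib_left)
      also have "\<dots> \<le> (\<Sum>p<n. lr p)" by (rule sum_mono, rule lrK)
      also have "\<dots> \<le> suminf lr" by (rule sum_le_suminf) (use summ_lr lr0 in \<open>auto\<close>)
      finally have "exp (2*K*(\<Sum>p<n. tau p)) \<le> exp (suminf lr)" by simp
      then have "exp (2*K*(\<Sum>p<n. tau p)) * D0 \<le> exp (suminf lr) * D0" using D0 by (rule mult_right_mono)
      then show ?thesis using I1[of n] M0eq by simp
    qed
    have key: "exp (2*K*tau n) * exp (- psi0 * del n) \<le> f n" for n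
    proof -
      have w0: "psi0 / K \<ge> 0" "psi0 / K \<le> 1" using psi0_nn psi0_K Kpos by auto
      have "exp (- (psi0 / K * (K * del n))) \<le> 1 - psi0 / K * (1 - exp (- (K * del n)))"
        by (rule convex_bound[OF w0])
      moreover have "psi0 / K * (K * del n) = psi0 * del n" using Kpos by simp
      ultimately have cb: "exp (- psi0 * del n) \<le> 1 - psi0 / K * (1 - exp (- K * del n))" by simp
      have "exp (2*K*tau n) * exp (- psi0 * del n) \<le>
            exp (K*tau n) / (2 - exp (K*tau n)) * max (1 - exp (- K * del n)) (1 - psi0 / K * (1 - exp (- K * del n)))"
        by (rule mult_mono) (use e2[of n] cb u2[of n] in \<open>auto\<close>)
      then show ?thesis using f_eq[of n] by simp
    qed
    have I2: "diam N x (tt (2*n)) \<le> c' ^ n * D0" for n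
    proof (induction n)
      case 0 then show ?case using t0 d0 by simp
    next
      case (Suc n)
      have hp: "psi (norm (x i s - x j s)) \<ge> psi0"
        if "s \<in> {tt (2*n)<..<tt (2*n+1)}" "i < N" "j < N" for s i j
      proof -
        have "norm (x i s - x j s) \<le> diam N x s" using that(2,3) by (rule diam_ge)
        also have "\<dots> \<le> diam N x (tt (2*n))" by (rule posmono[of n]) (use that in \<open>auto\<close>)
        also have "\<dots> \<le> M0" by (rule I1')
        finally have "norm (x i s - x j s) \<le> M0" .
        moreover have "- M0 \<le> norm (x i s - x j s)" using M0pos norm_ge_zero[of "x i s - x j s"] by linarith
        ultimately have "norm (x i s - x j s) \<in> {-M0..M0}" by simp
        then show ?thesis by (rule psi0_le)
      qed
      have P: "diam N x (tt (2*n+1)) \<le> exp (- psi0 * del n) * diam N x (tt (2*n))"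
        using phase_pos[OF N t_mono t0 sol, of n "tt (2*n)" "tt (2*n+1)" psi0] m1[of n] psi0_nn hp
        by (simp add: del_def)
      have "diam N x (tt (2 * Suc n)) = diam N x (tt (2*n+2))" by simp
      also have "\<dots> \<le> exp (2*K*tau n) * diam N x (tt (2*n+1))" by (rule step_neg)
      also have "\<dots> \<le> exp (2*K*tau n) * (exp (- psi0 * del n) * diam N x (tt (2*n)))"
        by (rule mult_left_mono) (use P in \<open>auto\<close>)
      also have "\<dots> = (exp (2*K*tau n) * exp (- psi0 * del n)) * diam N x (tt (2*n))" by simp
      also have "\<dots> \<le> f n * diam N x (tt (2*n))" by (rule mult_right_mono) (use key[of n] dnn in \<open>auto\<close>)
      also have "\<dots> \<le> c' * diam N x (tt (2*n))" by (rule mult_right_mono) (use fle[of n] dnn in \<open>auto\<close>)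
      also have "\<dots> \<le> c' * (c' ^ n * D0)" by (rule mult_left_mono) (use Suc c'pos in \<open>auto\<close>)
      finally show ?case by simp
    qed
    obtain m where m: "tt m > s"
    proof -
      have "eventually (\<lambda>m. tt m > s) sequentially"
        using t_lim by (simp add: filterlim_at_top_dense)
      then obtain N0 where "\<forall>m\<ge>N0. tt m > s" unfolding eventually_sequentially by blast
      then have "tt N0 > s" by simp
      then show ?thesis by (rule that)
    qed
    have ex: "\<exists>n. s < tt (2*n+2)"
      by (rule exI[of _ m]) (use m monoD[OF t_mono, of m "2*m+2"] in \<open>auto\<close>)
    define n where "n = (LEAST n. s < tt (2*n+2))"
    have n1: "s < tt (2*n+2)" unfolding n_def using ex by (rule LeastI_ex)
    have n2: "tt (2*n) \<le> s"
    proof (cases n)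
      case 0 then show ?thesis using t0 s0 by simp
    next
      case (Suc k)
      then have "\<not> s < tt (2*k+2)" using not_less_Least[of k "\<lambda>n. s < tt (2*n+2)"] unfolding n_def by auto
      then show ?thesis using Suc by simp
    qed
    have ds: "diam N x s \<le> 4 * diam N x (tt (2*n))"
    proof (cases "s \<le> tt (2*n+1)")
      case True
      have "diam N x s \<le> diam N x (tt (2*n))" by (rule posmono[of n]) (use True n2 in \<open>auto\<close>)
      then show ?thesis using dnn[of "tt (2*n)"] by linarith
    next
      case False
      have "diam N x s \<le> exp (2*K*(s - tt (2*n+1))) * diam N x (tt (2*n+1))"
        by (rule negb[of n]) (use False n1 in \<open>auto\<close>)
      also have "\<dots> \<le> exp (2*K*tau n) * diam N x (tt (2*n+1))"
        by (rule mult_right_mono) (use False n1 Kpos dnn in \<open>auto simp: tau_def\<close>)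
      also have "\<dots> \<le> 4 * diam N x (tt (2*n))"
      proof -
        have "exp (2*K*tau n) = exp (K*tau n) * exp (K*tau n)" by (simp flip: exp_add)
        also have "\<dots> \<le> 4" using mult_mono[of "exp (K*tau n)" 2 "exp (K*tau n)" 2] u2[of n] by simp
        finally have "exp (2*K*tau n) \<le> 4" .
        moreover have "diam N x (tt (2*n+1)) \<le> diam N x (tt (2*n))" by (rule posmono[of n]) (use m1[of n] in \<open>auto\<close>)
        ultimately show ?thesis by (rule mult_mono) (use dnn in \<open>auto\<close>)
      qed
      finally show ?thesis .
    qed
    have sL: "s \<le> real (Suc n) * L" using n1 ttL[of "Suc n"] by simp
    have ex_bd: "4 * c' ^ n \<le> exp (- gam * (s - ln 2 / K - T))"
    proof -
      have gT: "gam * T = ln (4 / c')" unfolding T_def using gpos by simp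
      have gL: "gam * L = - ln c'" unfolding gam_def using Lpos by simp
      have "- gam * (s - ln 2 / K - T) = - gam * s + gam * (ln 2 / K) + gam * T" by (simp add: algebra_simps)
      also have "\<dots> \<ge> - gam * (real (Suc n) * L) + ln (4 / c')"
      proof -
        have "gam * s \<le> gam * (real (Suc n) * L)" by (rule mult_left_mono) (use sL gpos in \<open>auto\<close>)
        moreover have "gam * (ln 2 / K) \<ge> 0" using gpos Kpos by simp
        ultimately show ?thesis using gT by linarith
      qed
      finally have le: "- gam * (real (Suc n) * L) + ln (4 / c') \<le> - gam * (s - ln 2 / K - T)" .
      have "- gam * (real (Suc n) * L) = real (Suc n) * (- (gam * L))" by (simp add: algebra_simps)
      also have "\<dots> = real (Suc n) * ln c'" using gL by simp
      finally have A: "- gam * (real (Suc n) * L) = real (Suc n) * ln c'" .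
      have E: "exp (real (Suc n) * ln c') = c' ^ Suc n" using c'pos by (simp only: exp_of_nat_mult exp_ln)
      have E2: "exp (ln (4 / c')) = 4 / c'" using c'pos by simp
      have "exp (- gam * (real (Suc n) * L) + ln (4 / c')) = c' ^ Suc n * (4 / c')"
        unfolding exp_add A E E2 ..
      also have "\<dots> = 4 * c' ^ n" using c'pos by simp
      finally show ?thesis using le by (metis exp_le_cancel_iff)
    qed
    have "diam N x s \<le> 4 * (c' ^ n * D0)" using ds I2[of n] by linarith
    also have "\<dots> = (4 * c' ^ n) * D0" by simp
    also have "\<dots> \<le> exp (- gam * (s - ln 2 / K - T)) * D0" using ex_bd D0 by (rule mult_right_mono)
    finally show ?thesis using d0 by simp
  qed
  show ?thesis
    using gpos Tpos main by blast
qed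

end
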